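(* Let $1\le k\le n$ and $\rho=\sum_{i=0}^k\lambda_i|D_n^i\rangle\langle D_n^i|$ with $\lambda_i\ge0$, $\sum_{i=0}^k\lambda_i=1$; set $\lambda_i=0$ for $k<i\le n$. Then $L(\rho)\le k$ if and only if the only solution $(a_0,\dots,a_n)$ with all $a_i\ge0$ of the linear system $$\sum_{i=0}^n a_{i}\frac{\binom{k}{s}\binom{n-k}{i-s}}{\binom{n}{i}}=\sum_{i=0}^k\lambda_i\frac{\binom{k}{s}\binom{n-k}{i-s}}{\binom{n}{i}},\qquad 0\le s\le k,$$ is $(a_0,\dots,a_n)=(\lambda_0,\dots,\lambda_k,0,\dots,0)$.
   Context: Convention: $\binom{m}{i}=0$ if $i<0$ or $i>m$. Dicke states: $|D_n^i\rangle=\binom{n}{i}^{-1/2}\sum_{s\in\{0,1\}^n,\ \sum_js_j=i}|s_1\rangle\otimes\cdots\otimes|s_n\rangle$. For $S\subseteq[n]$, $\rho_S$ is the partial trace of $\rho$ over qubits outside $S$; $\mathcal C(\rho,\mathcal S)=\{\sigma\text{ density matrix}:\sigma_S=\rho_S\ \forall S\in\mathcal S\}$; $\mathcal S$ determines $\rho$ if $\mathcal C(\rho,\mathcal S)=\{\rho\}$; $L(\rho)=\min_{\mathcal S\text{ determines }\rho}\max_{S\in\mathcal S}|S|$. *)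

theory Defs
  imports Complex_Main
begin

text \<open>n-qubit computational basis states |s_1 ... s_n> are indexed by subsets
  A of {0..<n}: qubit j is in state 1 iff j in A.\<close>

type_synonym qop = "nat set \<Rightarrow> nat set \<Rightarrow> complex"

definition basis_idx :: "nat \<Rightarrow> nat set set" where
  "basis_idx n = Pow {0..<n}"

definition density :: "nat \<Rightarrow> qop \<Rightarrow> bool" where
  "density n M \<longleftrightarrow>
     (\<forall>A B. (A \<notin> basis_idx n \<or> B \<notin> basis_idx n) \<longrightarrow> M A B = 0) \<and>
     (\<forall>A\<in>basis_idx n. \<forall>B\<in>basis_idx n. M B A = cnj (M A B)) \<and>
     (\<forall>v :: nat set \<Rightarrow> complex.
        (\<Sum>A\<in>basis_idx n. \<Sum>B\<in>basis_idx n. cnj (v A) * M A B * v B) \<in> \<real> \<and>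
        Re (\<Sum>A\<in>basis_idx n. \<Sum>B\<in>basis_idx n. cnj (v A) * M A B * v B) \<ge> 0) \<and>
     (\<Sum>A\<in>basis_idx n. M A A) = 1"

text \<open>Partial trace over the qubits outside S (S a subset of {0..<n}); the result
  is an operator on the qubits in S, indexed by subsets of S.\<close>
definition marginal :: "nat \<Rightarrow> qop \<Rightarrow> nat set \<Rightarrow> qop" where
  "marginal n M S = (\<lambda>A B. if A \<subseteq> S \<and> B \<subseteq> S
      then (\<Sum>C\<in>Pow ({0..<n} - S). M (A \<union> C) (B \<union> C)) else 0)"

definition compatible :: "nat \<Rightarrow> qop \<Rightarrow> nat set set \<Rightarrow> qop set" where
  "compatible n \<rho> \<S> = {\<sigma>. density n \<sigma> \<and> (\<forall>S\<in>\<S>. marginal n \<sigma> S = marginal n \<rho> S)}"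

definition determines :: "nat \<Rightarrow> nat set set \<Rightarrow> qop \<Rightarrow> bool" where
  "determines n \<S> \<rho> \<longleftrightarrow> \<S> \<subseteq> Pow {0..<n} \<and> compatible n \<rho> \<S> = {\<rho>}"

definition Lnum :: "nat \<Rightarrow> qop \<Rightarrow> nat" where
  "Lnum n \<rho> = (LEAST m. \<exists>\<S>. determines n \<S> \<rho> \<and> (\<forall>S\<in>\<S>. card S \<le> m))"

definition dicke :: "nat \<Rightarrow> nat \<Rightarrow> nat set \<Rightarrow> complex" where
  "dicke n i A = (if A \<in> basis_idx n \<and> card A = i
                  then complex_of_real (1 / sqrt (real (n choose i))) else 0)"

definition dicke_mixture :: "nat \<Rightarrow> nat \<Rightarrow> (nat \<Rightarrow> real) \<Rightarrow> qop" where
  "dicke_mixture n k lam = (\<lambda>A B.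
     \<Sum>i\<le>k. complex_of_real (lam i) * dicke n i A * cnj (dicke n i B))"

definition ibinom :: "nat \<Rightarrow> int \<Rightarrow> nat" where
  "ibinom m j = (if j < 0 then 0 else m choose nat j)"

definition coef :: "nat \<Rightarrow> nat \<Rightarrow> nat \<Rightarrow> nat \<Rightarrow> real" where
  "coef n k i s = real (k choose s) * real (ibinom (n - k) (int i - int s)) / real (n choose i)"

end

theory Submission
  imports Defs
begin

lemma swap_choose:
  fixes N p q :: nat
  shows "(N choose p) * ((N - p) choose q) = (N choose q) * ((N - q) choose p)"
proof (cases "p + q \<le> N")
  case True
  have 1: "(N choose (p+q)) * ((p+q) choose p) = (N choose p) * ((N - p) choose q)"
    using choose_mult[of p "p+q" N] True by simp
  have 2: "(N choose (p+q)) * ((p+q) choose q) = (N choose q) * ((N - q) choose p)"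
    using choose_mult[of q "p+q" N] True by simp
  have "(p+q) choose p = (p+q) choose q"
    using binomial_symmetric[of p "p+q"] by simp
  then show ?thesis using 1 2 by simp
next
  case False
  have "(N choose p) * ((N - p) choose q) = 0"
    using False by (cases "p \<le> N") auto
  moreover have "(N choose q) * ((N - q) choose p) = 0"
    using False by (cases "q \<le> N") auto
  ultimately show ?thesis by metis
qed

lemma nat_ident:
  fixes n k i s :: nat
  assumes "i \<le> n" "s \<le> k" "k \<le> n"
  shows "(n choose k) * (k choose s) * ibinom (n - k) (int i - int s)
       = (n choose i) * (i choose s) * ((n - i) choose (k - s))"
proof (cases "s \<le> i")
  case False
  then show ?thesis by (simp add: ibinom_def)
next
  case True
  have ib: "ibinom (n - k) (int i - int s) = (n - k) choose (i - s)"
    using True by (simp add: ibinom_def nat_diff_distrib)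
  have a: "(n choose k) * (k choose s) = (n choose s) * ((n - s) choose (k - s))"
    using choose_mult[of s k n] assms by simp
  have b: "(n choose i) * (i choose s) = (n choose s) * ((n - s) choose (i - s))"
    using choose_mult[of s i n] assms True by simp
  have c: "((n - s) choose (k - s)) * ((n - k) choose (i - s)) = ((n - s) choose (i - s)) * ((n - i) choose (k - s))"
    using swap_choose[of "n - s" "k - s" "i - s"] assms True
    by (metis diff_diff_cancel diff_le_mono2 diff_le_self le_trans diff_diff_left le_add_diff_inverse)
  show ?thesis unfolding ib
    by (metis a b c mult.assoc)
qed

lemma coef_alt:
  assumes "i \<le> n" "s \<le> k" "k \<le> n"
  shows "coef n k i s = real (i choose s) * real ((n - i) choose (k - s)) / real (n choose k)"
proof -
  have "real ((n choose k) * (k choose s) * ibinom (n - k) (int i - int s))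
       = real ((n choose i) * (i choose s) * ((n - i) choose (k - s)))"
    using nat_ident[OF assms] by simp
  moreover have "real (n choose k) > 0" "real (n choose i) > 0" using assms by auto
  ultimately show ?thesis unfolding coef_def
    by (simp add: field_simps)
qed

definition Lv :: "'a set \<Rightarrow> nat \<Rightarrow> 'a set set" where
  "Lv T i = {B. B \<subseteq> T \<and> card B = i}"

lemma finite_Lv: "finite T \<Longrightarrow> finite (Lv T i)"
  unfolding Lv_def by (rule finite_subset[of _ "Pow T"]) auto

lemma card_Lv: "finite T \<Longrightarrow> card (Lv T i) = card T choose i"
  unfolding Lv_def by (rule n_subsets)

lemma sum_levels:
  assumes "finite T"
  shows "(\<Sum>C\<in>Pow T. h C) = (\<Sum>j\<le>card T. \<Sum>C\<in>Lv T j. h C)"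
proof -
  have "(\<Sum>j\<le>card T. \<Sum>C\<in>{x. x \<in> Pow T \<and> card x = j}. h C) = (\<Sum>C\<in>Pow T. h C)"
    by (rule sum.group) (use assms card_mono in auto)
  moreover have "\<And>j. {x. x \<in> Pow T \<and> card x = j} = Lv T j" unfolding Lv_def by auto
  ultimately show ?thesis by simp
qed

lemma sum_card_fun:
  fixes g :: "nat \<Rightarrow> 'a::comm_semiring_1"
  assumes "finite T"
  shows "(\<Sum>C\<in>Pow T. g (card C)) = (\<Sum>j\<le>card T. of_nat (card T choose j) * g j)"
proof -
  have "(\<Sum>C\<in>Pow T. g (card C)) = (\<Sum>j\<le>card T. \<Sum>C\<in>Lv T j. g (card C))"
    by (rule sum_levels[OF assms])
  also have "\<dots> = (\<Sum>j\<le>card T. \<Sum>C\<in>Lv T j. g j)"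
    by (rule sum.cong) (auto simp: Lv_def)
  also have "\<dots> = (\<Sum>j\<le>card T. of_nat (card T choose j) * g j)"
    by (simp add: card_Lv[OF assms])
  finally show ?thesis .
qed

definition symm :: "nat \<Rightarrow> (nat \<Rightarrow> real) \<Rightarrow> qop" where
  "symm n a = (\<lambda>X Y. if X \<subseteq> {0..<n} \<and> Y \<subseteq> {0..<n} \<and> card X = card Y
      then complex_of_real (a (card X) / real (n choose card X)) else 0)"

definition Qf :: "nat \<Rightarrow> qop \<Rightarrow> (nat set \<Rightarrow> complex) \<Rightarrow> complex" where
  "Qf n M v = (\<Sum>A\<in>basis_idx n. \<Sum>B\<in>basis_idx n. cnj (v A) * M A B * v B)"

definition Bf :: "nat \<Rightarrow> qop \<Rightarrow> (nat set \<Rightarrow> complex) \<Rightarrow> (nat set \<Rightarrow> complex) \<Rightarrow> complex" where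
  "Bf n M u v = (\<Sum>A\<in>basis_idx n. \<Sum>B\<in>basis_idx n. cnj (u A) * M A B * v B)"

lemma dicke_eq_symm:
  assumes "k \<le> n"
  shows "dicke_mixture n k lam = symm n (\<lambda>i. if i \<le> k then lam i else 0)"
proof (intro ext)
  fix A B
  show "dicke_mixture n k lam A B = symm n (\<lambda>i. if i \<le> k then lam i else 0) A B"
  proof (cases "A \<subseteq> {0..<n} \<and> B \<subseteq> {0..<n} \<and> card A = card B \<and> card A \<le> k")
    case True
    have cA: "card A \<le> n" using True card_mono[of "{0..<n}" A] by auto
    have pos: "real (n choose card A) > 0" using cA by simp
    have "dicke_mixture n k lam A B = (\<Sum>i\<le>k. if i = card A then complex_of_real (lam i / real (n choose i)) else 0)"
      unfolding dicke_mixture_def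
    proof (rule sum.cong)
      fix i assume "i \<in> {..k}"
      show "complex_of_real (lam i) * dicke n i A * cnj (dicke n i B) =
         (if i = card A then complex_of_real (lam i / real (n choose i)) else 0)"
      proof (cases "i = card A")
        case True2: True
        have "real (n choose i) > 0" using pos True2 by simp
        then have "complex_of_real (1 / sqrt (real (n choose i))) * cnj (complex_of_real (1 / sqrt (real (n choose i))))
             = complex_of_real (1 / real (n choose i))"
          by (simp add: of_real_mult[symmetric] del: of_real_mult)
        then show ?thesis using True True2 unfolding dicke_def basis_idx_def
          by (simp add: divide_inverse)
      qed (use True in \<open>auto simp: dicke_def\<close>)
    qed simp
    also have "\<dots> = complex_of_real (lam (card A) / real (n choose card A))"
      using True by (simp add: sum.delta)
    finally show ?thesis using True unfolding symm_def by simp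
  next
    case False
    have "\<forall>i\<in>{..k}. complex_of_real (lam i) * dicke n i A * cnj (dicke n i B) = 0"
      using False by (auto simp: dicke_def basis_idx_def)
    then have "dicke_mixture n k lam A B = 0" unfolding dicke_mixture_def by (intro sum.neutral) blast
    moreover have "symm n (\<lambda>i. if i \<le> k then lam i else 0) A B = 0"
      using False by (auto simp: symm_def)
    ultimately show ?thesis by simp
  qed
qed

lemma basis_idx_eq: "basis_idx n = Pow {0..<n}" by (simp add: basis_idx_def)

lemma sum_levels_n: "(\<Sum>C\<in>Pow {0..<n}. h C) = (\<Sum>j\<le>n. \<Sum>C\<in>Lv {0..<n} j. h C)"
  using sum_levels[of "{0..<n}" h] by simp

lemma cnj_mult_self: "cnj w * w = complex_of_real ((cmod w)^2)"
  using complex_norm_square[of w] by (simp add: mult.commute)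

lemma symm_on_levels:
  assumes "A \<in> Lv {0..<n} i" "B \<in> Lv {0..<n} j"
  shows "symm n a A B = (if i = j then complex_of_real (a i / real (n choose i)) else 0)"
  using assms by (auto simp: symm_def Lv_def)

lemma Qf_symm:
  "Qf n (symm n a) v = (\<Sum>i\<le>n. complex_of_real (a i / real (n choose i) * (cmod (\<Sum>X\<in>Lv {0..<n} i. v X))^2))"
proof -
  let ?L = "Lv {0..<n}"
  let ?c = "\<lambda>i. complex_of_real (a i / real (n choose i))"
  have "Qf n (symm n a) v = (\<Sum>i\<le>n. \<Sum>A\<in>?L i. \<Sum>B\<in>Pow {0..<n}. cnj (v A) * symm n a A B * v B)"
    unfolding Qf_def basis_idx_eq using sum_levels[of "{0..<n}"] by simp
  also have "\<dots> = (\<Sum>i\<le>n. \<Sum>A\<in>?L i. \<Sum>j\<le>n. \<Sum>B\<in>?L j. cnj (v A) * symm n a A B * v B)"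
    by (intro sum.cong refl) (rule sum_levels_n)
  also have "\<dots> = (\<Sum>i\<le>n. \<Sum>A\<in>?L i. \<Sum>j\<le>n. if j = i then (\<Sum>B\<in>?L i. cnj (v A) * ?c i * v B) else 0)"
    by (intro sum.cong refl) (auto simp: symm_on_levels)
  also have "\<dots> = (\<Sum>i\<le>n. \<Sum>A\<in>?L i. \<Sum>B\<in>?L i. cnj (v A) * ?c i * v B)"
    by (simp add: sum.delta)
  also have "\<dots> = (\<Sum>i\<le>n. ?c i * (cnj (\<Sum>X\<in>?L i. v X) * (\<Sum>X\<in>?L i. v X)))"
    by (simp add: sum_distrib_left sum_distrib_right algebra_simps)
  also have "\<dots> = (\<Sum>i\<le>n. complex_of_real (a i / real (n choose i) * (cmod (\<Sum>X\<in>?L i. v X))^2))"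
    by (intro sum.cong refl) (subst cnj_mult_self, simp only: of_real_mult)
  finally show ?thesis .
qed

lemma density_symm:
  assumes "\<forall>i\<le>n. a i \<ge> 0" "(\<Sum>i\<le>n. a i) = 1"
  shows "density n (symm n a)"
  unfolding density_def
proof (intro conjI allI impI ballI)
  fix A B assume "A \<notin> basis_idx n \<or> B \<notin> basis_idx n"
  then show "symm n a A B = 0" by (auto simp: symm_def basis_idx_def)
next
  fix A B assume "A \<in> basis_idx n" "B \<in> basis_idx n"
  then show "symm n a B A = cnj (symm n a A B)" by (auto simp: symm_def)
next
  fix v :: "nat set \<Rightarrow> complex"
  have e: "(\<Sum>A\<in>basis_idx n. \<Sum>B\<in>basis_idx n. cnj (v A) * symm n a A B * v B) = Qf n (symm n a) v"
    by (simp add: Qf_def)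
  have r: "Qf n (symm n a) v = complex_of_real (\<Sum>i\<le>n. a i / real (n choose i) * (cmod (\<Sum>X\<in>Lv {0..<n} i. v X))^2)"
    by (simp add: Qf_symm)
  have nn: "(\<Sum>i\<le>n. a i / real (n choose i) * (cmod (\<Sum>X\<in>Lv {0..<n} i. v X))^2) \<ge> 0"
    using assms(1) by (intro sum_nonneg) auto
  show "(\<Sum>A\<in>basis_idx n. \<Sum>B\<in>basis_idx n. cnj (v A) * symm n a A B * v B) \<in> \<real>"
    unfolding e r by simp
  show "Re (\<Sum>A\<in>basis_idx n. \<Sum>B\<in>basis_idx n. cnj (v A) * symm n a A B * v B) \<ge> 0"
    unfolding e r using nn by simp
next
  have "(\<Sum>A\<in>basis_idx n. symm n a A A) = (\<Sum>i\<le>n. \<Sum>A\<in>Lv {0..<n} i. symm n a A A)"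
    unfolding basis_idx_eq using sum_levels[of "{0..<n}"] by simp
  also have "\<dots> = (\<Sum>i\<le>n. \<Sum>A\<in>Lv {0..<n} i. complex_of_real (a i / real (n choose i)))"
    by (intro sum.cong refl) (simp add: symm_on_levels)
  also have "\<dots> = (\<Sum>i\<le>n. complex_of_real (a i))"
    by (intro sum.cong refl) (simp add: card_Lv)
  also have "\<dots> = 1" using assms(2) by (metis of_real_1 of_real_sum)
  finally show "(\<Sum>A\<in>basis_idx n. symm n a A A) = 1" .
qed

definition G :: "nat \<Rightarrow> (nat \<Rightarrow> real) \<Rightarrow> nat \<Rightarrow> nat \<Rightarrow> real" where
  "G n a m t = (\<Sum>j\<le>m. real (m choose j) * (a (t + j) / real (n choose (t + j))))"

lemma marginal_symm:
  assumes "S \<subseteq> {0..<n}" "A \<subseteq> S" "B \<subseteq> S"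
  shows "marginal n (symm n a) S A B = (if card A = card B then complex_of_real (G n a (n - card S) (card A)) else 0)"
proof -
  have fin: "finite ({0..<n} - S)" by simp
  have cS: "card ({0..<n} - S) = n - card S"
    using assms(1) by (simp add: card_Diff_subset finite_subset)
  have fA: "finite A" "finite B" using assms finite_subset by (metis finite_atLeastLessThan subset_trans)+
  have "marginal n (symm n a) S A B = (\<Sum>C\<in>Pow ({0..<n} - S). symm n a (A \<union> C) (B \<union> C))"
    using assms by (simp add: marginal_def)
  also have "\<dots> = (\<Sum>C\<in>Pow ({0..<n} - S). (if card A = card B then complex_of_real (a (card A + card C) / real (n choose (card A + card C))) else 0))"
  proof (intro sum.cong refl)
    fix C assume C: "C \<in> Pow ({0..<n} - S)"
    have fC: "finite C" using C finite_subset fin by auto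
    have dA: "A \<inter> C = {}" "B \<inter> C = {}" using C assms by auto
    have "card (A \<union> C) = card A + card C" "card (B \<union> C) = card B + card C"
      using card_Un_disjoint fA fC dA by auto
    moreover have "A \<union> C \<subseteq> {0..<n}" "B \<union> C \<subseteq> {0..<n}" using assms C by auto
    ultimately show "symm n a (A \<union> C) (B \<union> C) = (if card A = card B then complex_of_real (a (card A + card C) / real (n choose (card A + card C))) else 0)"
      by (simp add: symm_def)
  qed
  also have "\<dots> = (if card A = card B then complex_of_real (G n a (n - card S) (card A)) else 0)"
  proof (cases "card A = card B")
    case True
    have "(\<Sum>C\<in>Pow ({0..<n} - S). complex_of_real (a (card A + card C) / real (n choose (card A + card C))))
        = (\<Sum>j\<le>n - card S. of_nat ((n - card S) choose j) * complex_of_real (a (card A + j) / real (n choose (card A + j))))"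
      using sum_card_fun[OF fin, of "\<lambda>j. complex_of_real (a (card A + j) / real (n choose (card A + j)))"] cS by simp
    also have "\<dots> = complex_of_real (G n a (n - card S) (card A))"
      by (simp add: G_def of_real_sum)
    finally show ?thesis using True by simp
  qed simp
  finally show ?thesis .
qed

lemma G_Suc: "G n a (Suc m) t = G n a m t + G n a m (Suc t)"
proof -
  let ?f = "\<lambda>i. a i / real (n choose i)"
  have 1: "G n a (Suc m) t = ?f t + (\<Sum>j\<le>m. real (Suc m choose Suc j) * ?f (t + Suc j))"
    unfolding G_def by (subst sum.atMost_Suc_shift) simp
  have 2: "G n a m t = ?f t + (\<Sum>j\<le>m. real (m choose Suc j) * ?f (t + Suc j))"
  proof -
    have "G n a m t = (\<Sum>j\<le>Suc m. real (m choose j) * ?f (t + j))"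
      unfolding G_def by simp
    also have "\<dots> = ?f t + (\<Sum>j\<le>m. real (m choose Suc j) * ?f (t + Suc j))"
      by (subst sum.atMost_Suc_shift) simp
    finally show ?thesis .
  qed
  have 3: "G n a m (Suc t) = (\<Sum>j\<le>m. real (m choose j) * ?f (t + Suc j))"
    unfolding G_def by simp
  have 4: "(\<Sum>j\<le>m. real (Suc m choose Suc j) * ?f (t + Suc j)) = (\<Sum>j\<le>m. real (m choose j) * ?f (t + Suc j)) + (\<Sum>j\<le>m. real (m choose Suc j) * ?f (t + Suc j))"
    by (simp only: binomial_Suc_Suc of_nat_add distrib_right sum.distrib)
  show ?thesis unfolding 1 2 3 4 by simp
qed

lemma sys_G:
  assumes "s \<le> k" "k \<le> n"
  shows "(\<Sum>i\<le>n. a i * coef n k i s) = real (k choose s) * G n a (n - k) s"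
proof -
  let ?F = "\<lambda>i. a i * coef n k i s"
  have z: "\<And>i. i < s \<Longrightarrow> ?F i = 0" by (simp add: coef_def ibinom_def)
  have "(\<Sum>i\<le>n. ?F i) = (\<Sum>i\<in>{s..n}. ?F i)"
    by (rule sum.mono_neutral_right) (auto simp: coef_def ibinom_def)
  also have "\<dots> = (\<Sum>j\<le>n - s. ?F (s + j))"
  proof -
    have "{s..n} = (\<lambda>j. s + j) ` {..n - s}"
    proof
      show "{s..n} \<subseteq> (\<lambda>j. s + j) ` {..n - s}"
      proof
        fix x assume "x \<in> {s..n}"
        then have "x = s + (x - s)" "x - s \<in> {..n - s}" by auto
        then show "x \<in> (\<lambda>j. s + j) ` {..n - s}" by blast
      qed
    qed (use assms in auto)
    then show ?thesis by (simp add: sum.reindex inj_on_def)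
  qed
  also have "\<dots> = (\<Sum>j\<le>n - s. real (k choose s) * (real ((n - k) choose j) * (a (s + j) / real (n choose (s + j)))))"
    by (intro sum.cong refl) (simp add: coef_def ibinom_def)
  also have "\<dots> = (\<Sum>j\<le>n - k. real (k choose s) * (real ((n - k) choose j) * (a (s + j) / real (n choose (s + j)))))"
    by (rule sum.mono_neutral_right) (use assms in auto)
  also have "\<dots> = real (k choose s) * G n a (n - k) s"
    by (simp add: G_def sum_distrib_left)
  finally show ?thesis .
qed

lemma G_total: "G n a n 0 = (\<Sum>j\<le>n. a j)"
  unfolding G_def by (intro sum.cong refl) auto

lemma marginal_full:
  assumes "density n \<tau>"
  shows "marginal n \<tau> {0..<n} = \<tau>"
proof (intro ext)
  fix A B
  show "marginal n \<tau> {0..<n} A B = \<tau> A B"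
  proof (cases "A \<subseteq> {0..<n} \<and> B \<subseteq> {0..<n}")
    case True then show ?thesis by (simp add: marginal_def)
  next
    case False
    then have "\<tau> A B = 0" using assms unfolding density_def basis_idx_def by auto
    then show ?thesis using False by (simp add: marginal_def)
  qed
qed

lemma full_det:
  assumes "density n \<rho>"
  shows "determines n {{0..<n}} \<rho>"
  unfolding determines_def compatible_def
  using assms marginal_full by auto

lemma Lnum_exists:
  assumes "density n \<rho>" "Lnum n \<rho> \<le> k"
  shows "\<exists>\<S>. determines n \<S> \<rho> \<and> (\<forall>S\<in>\<S>. card S \<le> k)"
proof -
  let ?P = "\<lambda>m. \<exists>\<S>. determines n \<S> \<rho> \<and> (\<forall>S\<in>\<S>. card S \<le> m)"
  have "?P n" using full_det[OF assms(1)] by (intro exI[of _ "{{0..<n}}"]) auto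
  then have "?P (Lnum n \<rho>)" unfolding Lnum_def by (rule LeastI)
  then show ?thesis using assms(2) by (meson le_trans)
qed

lemma Lnum_le:
  assumes "determines n \<S> \<rho>" "\<forall>S\<in>\<S>. card S \<le> k"
  shows "Lnum n \<rho> \<le> k"
  unfolding Lnum_def by (rule Least_le) (use assms in blast)

lemma sum_lam':
  assumes "k \<le> n"
  shows "(\<Sum>i\<le>n. (if i \<le> k then (f::nat\<Rightarrow>real) i else 0)) = (\<Sum>i\<le>k. f i)"
proof -
  have "(\<Sum>i\<le>n. (if i \<le> k then f i else 0)) = (\<Sum>i\<le>k. (if i \<le> k then f i else 0))"
    by (rule sum.mono_neutral_right) (use assms in auto)
  then show ?thesis by simp
qed

lemma G_down:
  assumes "k \<le> n" "\<forall>s\<le>k. G n a (n - k) s = G n b (n - k) s"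
  shows "\<forall>m\<le>k. \<forall>t\<le>m. G n a (n - m) t = G n b (n - m) t"
proof -
  have "\<forall>t\<le>k - d. G n a (n - (k - d)) t = G n b (n - (k - d)) t" if "d \<le> k" for d
    using that
  proof (induction d)
    case 0 then show ?case using assms by simp
  next
    case (Suc d)
    define m where "m = k - Suc d"
    have km: "k - d = Suc m" using Suc.prems m_def by simp
    have nm: "n - m = Suc (n - Suc m)" using Suc.prems m_def assms(1) by simp
    show ?case
    proof (intro allI impI)
      fix t assume "t \<le> k - Suc d"
      then have "t \<le> Suc m" "Suc t \<le> Suc m" using m_def by auto
      then show "G n a (n - (k - Suc d)) t = G n b (n - (k - Suc d)) t"
        using Suc.IH Suc.prems km unfolding m_def[symmetric] nm G_Suc by simp
    qed
  qed
  then show ?thesis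
    by (metis diff_diff_cancel diff_le_self)
qed

lemma fwd:
  fixes n k :: nat and lam a :: "nat \<Rightarrow> real"
  assumes "k \<le> n" "\<forall>i\<le>k. lam i \<ge> 0" "(\<Sum>i\<le>k. lam i) = 1"
    and lam'_def: "lam' = (\<lambda>i. if i \<le> k then lam i else 0)"
    and L: "Lnum n (symm n lam') \<le> k"
    and a0: "\<forall>i\<le>n. a i \<ge> 0"
    and sys: "\<forall>s\<le>k. (\<Sum>i\<le>n. a i * coef n k i s) = (\<Sum>i\<le>k. lam i * coef n k i s)"
  shows "\<forall>i\<le>n. a i = lam' i"
proof -
  let ?\<rho> = "symm n lam'"
  have sl: "(\<Sum>i\<le>n. lam' i) = 1" using sum_lam'[OF assms(1)] assms(3) unfolding lam'_def by simp
  have dr: "density n ?\<rho>"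
    by (rule density_symm) (use assms(2) sl in \<open>auto simp: lam'_def\<close>)
  obtain \<S> where det: "determines n \<S> ?\<rho>" and cS: "\<forall>S\<in>\<S>. card S \<le> k"
    using Lnum_exists[OF dr L] by blast
  have Gk: "\<forall>s\<le>k. G n a (n - k) s = G n lam' (n - k) s"
  proof (intro allI impI)
    fix s assume s: "s \<le> k"
    have "(\<Sum>i\<le>k. lam i * coef n k i s) = (\<Sum>i\<le>n. lam' i * coef n k i s)"
    proof -
      have "(\<Sum>i\<le>n. lam' i * coef n k i s) = (\<Sum>i\<le>n. if i \<le> k then lam i * coef n k i s else 0)"
        by (intro sum.cong) (auto simp: lam'_def)
      then show ?thesis using sum_lam'[OF assms(1), of "\<lambda>i. lam i * coef n k i s"] by simp
    qed
    then have "real (k choose s) * G n a (n - k) s = real (k choose s) * G n lam' (n - k) s"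
      using sys s sys_G[OF s assms(1)] by metis
    moreover have "real (k choose s) \<noteq> 0" using s by simp
    ultimately show "G n a (n - k) s = G n lam' (n - k) s" by simp
  qed
  have Gall: "\<forall>m\<le>k. \<forall>t\<le>m. G n a (n - m) t = G n lam' (n - m) t"
    by (rule G_down[OF assms(1) Gk])
  have "(\<Sum>i\<le>n. a i) = 1"
    using Gall[rule_format, of 0 0] G_total[of n a] G_total[of n lam'] sl by simp
  then have da: "density n (symm n a)" using a0 by (intro density_symm) auto
  have Ssub: "\<S> \<subseteq> Pow {0..<n}" using det unfolding determines_def by simp
  have "symm n a \<in> compatible n ?\<rho> \<S>"
    unfolding compatible_def
  proof (intro CollectI conjI ballI da)
    fix S assume S: "S \<in> \<S>"
    then have S1: "S \<subseteq> {0..<n}" "card S \<le> k" using Ssub cS by auto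
    have fS: "finite S" using S1 finite_subset by auto
    show "marginal n (symm n a) S = marginal n ?\<rho> S"
    proof (intro ext)
      fix A B
      show "marginal n (symm n a) S A B = marginal n ?\<rho> S A B"
      proof (cases "A \<subseteq> S \<and> B \<subseteq> S")
        case True
        have "card A \<le> card S" using True fS card_mono by auto
        then show ?thesis using True marginal_symm[OF S1(1)] Gall S1(2) by simp
      qed (auto simp: marginal_def)
    qed
  qed
  then have eq: "symm n a = ?\<rho>" using det unfolding determines_def by auto
  show ?thesis
  proof (intro allI impI)
    fix i assume i: "i \<le> n"
    have "symm n a {0..<i} {0..<i} = ?\<rho> {0..<i} {0..<i}" using eq by simp
    then have "a i / real (n choose i) = lam' i / real (n choose i)"
      using i by (simp add: symm_def)
    moreover have "real (n choose i) \<noteq> 0" using i by simp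
    ultimately show "a i = lam' i" by simp
  qed
qed

lemma finite_basis [simp]: "finite (basis_idx n)" by (simp add: basis_idx_def)

lemma Qf_add:
  "Qf n M (\<lambda>X. u X + t * w X) = Qf n M u + t * Bf n M u w + cnj t * Bf n M w u + cnj t * t * Qf n M w"
proof -
  have e: "\<And>A B. cnj (u A + t * w A) * M A B * (u B + t * w B) =
     cnj (u A) * M A B * u B + t * (cnj (u A) * M A B * w B) + cnj t * (cnj (w A) * M A B * u B)
     + cnj t * t * (cnj (w A) * M A B * w B)"
    by (simp add: algebra_simps)
  show ?thesis
    unfolding Qf_def Bf_def e by (simp only: sum.distrib sum_distrib_left)
qed

lemma Bf_herm:
  assumes "density n M"
  shows "Bf n M w u = cnj (Bf n M u w)"
proof -
  have h: "\<And>A B. A \<in> basis_idx n \<Longrightarrow> B \<in> basis_idx n \<Longrightarrow> M B A = cnj (M A B)"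
    using assms unfolding density_def by blast
  have "cnj (Bf n M u w) = (\<Sum>A\<in>basis_idx n. \<Sum>B\<in>basis_idx n. u A * cnj (M A B) * cnj (w B))"
    unfolding Bf_def by (simp add: cnj_sum)
  also have "\<dots> = (\<Sum>A\<in>basis_idx n. \<Sum>B\<in>basis_idx n. u A * M B A * cnj (w B))"
  proof (intro sum.cong refl)
    fix A B assume "A \<in> basis_idx n" "B \<in> basis_idx n"
    then have "M B A = cnj (M A B)" by (rule h)
    then show "u A * cnj (M A B) * cnj (w B) = u A * M B A * cnj (w B)" by (simp only:)
  qed
  also have "\<dots> = (\<Sum>B\<in>basis_idx n. \<Sum>A\<in>basis_idx n. u A * M B A * cnj (w B))"
    by (rule sum.swap)
  also have "\<dots> = Bf n M w u"
    unfolding Bf_def by (intro sum.cong refl) (simp add: algebra_simps)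
  finally show ?thesis by simp
qed

lemma Qf_real:
  assumes "density n M"
  shows "Qf n M v \<in> \<real>" "Re (Qf n M v) \<ge> 0"
  using assms unfolding density_def Qf_def by blast+

lemma kernel:
  assumes d: "density n M" and q: "Qf n M w = 0"
  shows "Bf n M u w = 0"
proof (rule ccontr)
  define \<beta> where "\<beta> = Bf n M u w"
  assume "Bf n M u w \<noteq> 0"
  then have b0: "\<beta> \<noteq> 0" unfolding \<beta>_def .
  define r where "r = (Re (Qf n M u) + 1) / (2 * (cmod \<beta>)^2)"
  have cpos: "(cmod \<beta>)^2 > 0" using b0 by simp
  define t where "t = - complex_of_real r * cnj \<beta>"
  have "Qf n M (\<lambda>X. u X + t * w X) = Qf n M u + t * \<beta> + cnj t * cnj \<beta>"
    using Qf_add[of n M u t w] q Bf_herm[OF d, of w u] unfolding \<beta>_def by simp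
  also have "\<dots> = Qf n M u - complex_of_real (2 * r * (cmod \<beta>)^2)"
  proof -
    have "t * \<beta> + cnj t * cnj \<beta> = - (complex_of_real (2 * r) * (\<beta> * cnj \<beta>))"
      unfolding t_def by (simp add: algebra_simps)
    also have "\<dots> = - complex_of_real (2 * r * (cmod \<beta>)^2)"
      by (simp only: complex_norm_square[symmetric] of_real_mult)
    finally have "t * \<beta> + cnj t * cnj \<beta> = - complex_of_real (2 * r * (cmod \<beta>)^2)" .
    then show ?thesis by (metis add.assoc diff_conv_add_uminus)
  qed
  finally have "Re (Qf n M (\<lambda>X. u X + t * w X)) = Re (Qf n M u) - 2 * r * (cmod \<beta>)^2" by simp
  also have "\<dots> = -1" unfolding r_def using cpos by (simp add: field_simps)
  finally show False using Qf_real(2)[OF d, of "\<lambda>X. u X + t * w X"] by simp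
qed

definition dl :: "nat set \<Rightarrow> nat set \<Rightarrow> complex" where
  "dl Z = (\<lambda>X. if X = Z then 1 else 0)"

lemma Bf_dl:
  assumes "Z \<in> basis_idx n"
  shows "Bf n M (dl Z) w = (\<Sum>B\<in>basis_idx n. M Z B * w B)"
proof -
  have "Bf n M (dl Z) w = (\<Sum>A\<in>basis_idx n. if A = Z then (\<Sum>B\<in>basis_idx n. M A B * w B) else 0)"
    unfolding Bf_def by (intro sum.cong refl) (auto simp: dl_def)
  also have "\<dots> = (\<Sum>B\<in>basis_idx n. M Z B * w B)"
    using assms by (simp add: sum.delta)
  finally show ?thesis .
qed

lemma Bf_dl_dl:
  assumes "Z \<in> basis_idx n" "X \<in> basis_idx n"
  shows "Bf n M (dl Z) (dl X) = M Z X"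
proof -
  have "Bf n M (dl Z) (dl X) = (\<Sum>B\<in>basis_idx n. if B = X then M Z B else 0)"
    unfolding Bf_dl[OF assms(1)] by (intro sum.cong refl) (auto simp: dl_def)
  also have "\<dots> = M Z X" using assms by (simp add: sum.delta)
  finally show ?thesis .
qed

lemma Qf_dl:
  assumes "X \<in> basis_idx n"
  shows "Qf n M (dl X) = M X X"
  using Bf_dl_dl[OF assms assms, of M] unfolding Qf_def Bf_def by simp

lemma diag_real:
  assumes "density n M" "X \<in> basis_idx n"
  shows "M X X \<in> \<real>" "Re (M X X) \<ge> 0"
  using Qf_real[OF assms(1), of "dl X"] Qf_dl[OF assms(2)] by auto

lemma zero_row:
  assumes d: "density n M" and z: "M X X = 0"
  shows "M Y X = 0" "M X Y = 0"
proof -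
  have out: "\<And>A B. A \<notin> basis_idx n \<or> B \<notin> basis_idx n \<Longrightarrow> M A B = 0"
    using d unfolding density_def by blast
  have h: "\<And>A B. A \<in> basis_idx n \<Longrightarrow> B \<in> basis_idx n \<Longrightarrow> M B A = cnj (M A B)"
    using d unfolding density_def by blast
  show 1: "M Y X = 0"
  proof (cases "X \<in> basis_idx n \<and> Y \<in> basis_idx n")
    case True
    have "Qf n M (dl X) = 0" using Qf_dl[of X n M] True z by simp
    then have "Bf n M (dl Y) (dl X) = 0" by (rule kernel[OF d])
    then show ?thesis using Bf_dl_dl True by simp
  qed (use out in blast)
  show "M X Y = 0"
  proof (cases "X \<in> basis_idx n \<and> Y \<in> basis_idx n")
    case True then show ?thesis using h[of Y X] 1 by simp
  qed (use out in blast)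
qed

lemma inj_union:
  assumes "\<forall>A\<in>T1. A \<subseteq> S" "\<forall>C\<in>T2. C \<inter> S = {}"
  shows "inj_on (\<lambda>(A, C). A \<union> C) (T1 \<times> T2)"
proof (rule inj_onI)
  fix p q assume pq: "p \<in> T1 \<times> T2" "q \<in> T1 \<times> T2" "(\<lambda>(A, C). A \<union> C) p = (\<lambda>(A, C). A \<union> C) q"
  obtain A C A' C' where e: "p = (A, C)" "q = (A', C')" by (cases p, cases q)
  from pq(1,2) have "A = (A \<union> C) \<inter> S" "A' = (A' \<union> C') \<inter> S" "C = (A \<union> C) - S" "C' = (A' \<union> C') - S"
    unfolding e using assms by auto
  moreover have "A \<union> C = A' \<union> C'" using pq(3) unfolding e by simp
  ultimately show "p = q" unfolding e by metis
qed

lemma inner_count: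
  assumes S: "S \<subseteq> {0..<n}"
  shows "(\<Sum>A\<in>Lv S s. marginal n \<tau> S A A) = (\<Sum>X\<in>{X. X \<subseteq> {0..<n} \<and> card (X \<inter> S) = s}. \<tau> X X)"
proof -
  let ?h = "\<lambda>(A, C). A \<union> C"
  let ?T = "Lv S s \<times> Pow ({0..<n} - S)"
  have "(\<Sum>A\<in>Lv S s. marginal n \<tau> S A A) = (\<Sum>A\<in>Lv S s. \<Sum>C\<in>Pow ({0..<n} - S). \<tau> (A \<union> C) (A \<union> C))"
    by (intro sum.cong refl) (auto simp: marginal_def Lv_def)
  also have "\<dots> = (\<Sum>(A, C)\<in>?T. \<tau> (A \<union> C) (A \<union> C))"
    by (rule sum.cartesian_product)
  also have "\<dots> = (\<Sum>X\<in>?h ` ?T. \<tau> X X)"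
  proof -
    have "inj_on ?h ?T"
      by (rule inj_union[where S=S]) (auto simp: Lv_def)
    then show ?thesis by (simp add: sum.reindex case_prod_unfold)
  qed
  also have "?h ` ?T = {X. X \<subseteq> {0..<n} \<and> card (X \<inter> S) = s}"
  proof
    show "?h ` ?T \<subseteq> {X. X \<subseteq> {0..<n} \<and> card (X \<inter> S) = s}"
    proof
      fix x assume "x \<in> ?h ` ?T"
      then obtain A C where AC: "x = A \<union> C" "A \<in> Lv S s" "C \<in> Pow ({0..<n} - S)" by auto
      from AC(2,3) have "(A \<union> C) \<inter> S = A" using calculation by (auto simp: Lv_def)
      then show "x \<in> {X. X \<subseteq> {0..<n} \<and> card (X \<inter> S) = s}"
        using S AC by (auto simp: Lv_def)
    qed
    show "{X. X \<subseteq> {0..<n} \<and> card (X \<inter> S) = s} \<subseteq> ?h ` ?T"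
    proof
      fix X assume X: "X \<in> {X. X \<subseteq> {0..<n} \<and> card (X \<inter> S) = s}"
      then have "X = ?h (X \<inter> S, X - S)" "(X \<inter> S, X - S) \<in> ?T" by (auto simp: Lv_def)
      then show "X \<in> ?h ` ?T" by blast
    qed
  qed
  finally show ?thesis .
qed

lemma count_sets:
  assumes X: "X \<subseteq> {0..<n}" and s: "s \<le> k"
  shows "card {S. S \<in> Lv {0..<n} k \<and> card (X \<inter> S) = s} = (card X choose s) * ((n - card X) choose (k - s))"
proof -
  let ?h = "\<lambda>(P, R). P \<union> R"
  let ?T = "Lv X s \<times> Lv ({0..<n} - X) (k - s)"
  have fX: "finite X" using X finite_subset by auto
  have inj: "inj_on ?h ?T"
    by (rule inj_union[where S=X]) (auto simp: Lv_def)
  have img: "?h ` ?T = {S. S \<in> Lv {0..<n} k \<and> card (X \<inter> S) = s}"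
  proof
    show "?h ` ?T \<subseteq> {S. S \<in> Lv {0..<n} k \<and> card (X \<inter> S) = s}"
    proof
      fix x assume "x \<in> ?h ` ?T"
      then obtain A C where xe: "x = A \<union> C" and A: "A \<in> Lv X s" and C: "C \<in> Lv ({0..<n} - X) (k - s)" by auto
      have fA: "finite A" "finite C" using A C fX finite_subset by (auto simp: Lv_def)
      have dj: "A \<inter> C = {}" using A C by (auto simp: Lv_def)
      have "card (A \<union> C) = k" using card_Un_disjoint[OF fA dj] A C s by (auto simp: Lv_def)
      moreover have "X \<inter> (A \<union> C) = A" using A C by (auto simp: Lv_def)
      ultimately show "x \<in> {S. S \<in> Lv {0..<n} k \<and> card (X \<inter> S) = s}"
        using A C X xe by (auto simp: Lv_def)
    qed
    show "{S. S \<in> Lv {0..<n} k \<and> card (X \<inter> S) = s} \<subseteq> ?h ` ?T"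
    proof
      fix S assume S: "S \<in> {S. S \<in> Lv {0..<n} k \<and> card (X \<inter> S) = s}"
      have fS: "finite S" using S finite_subset by (auto simp: Lv_def)
      have "card (S - X) = card S - card (S \<inter> X)" using fS by (simp add: card_Diff_subset_Int)
      also have "\<dots> = k - s" using S by (auto simp: Lv_def Int_commute)
      finally have "S = ?h (X \<inter> S, S - X)" "(X \<inter> S, S - X) \<in> ?T" using S by (auto simp: Lv_def)
      then show "S \<in> ?h ` ?T" by blast
    qed
  qed
  have cd: "card ({0..<n} - X) = n - card X" using X by (simp add: card_Diff_subset fX)
  have "card (?h ` ?T) = card ?T" by (rule card_image[OF inj])
  also have "\<dots> = (card X choose s) * ((n - card X) choose (k - s))"
    by (simp add: card_cartesian_product card_Lv fX cd)
  finally show ?thesis using img by simp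
qed

lemma diag_count:
  fixes \<tau> :: qop
  assumes "s \<le> k" "k \<le> n"
  shows "(\<Sum>S\<in>Lv {0..<n} k. \<Sum>A\<in>Lv S s. marginal n \<tau> S A A)
     = (\<Sum>i\<le>n. of_nat ((i choose s) * ((n - i) choose (k - s))) * (\<Sum>X\<in>Lv {0..<n} i. \<tau> X X))"
proof -
  let ?N = "\<lambda>i. (i choose s) * ((n - i) choose (k - s))"
  have fL: "finite (Lv {0..<n} k)" by (simp add: finite_Lv)
  have "(\<Sum>S\<in>Lv {0..<n} k. \<Sum>A\<in>Lv S s. marginal n \<tau> S A A)
      = (\<Sum>S\<in>Lv {0..<n} k. \<Sum>X\<in>Pow {0..<n}. if card (X \<inter> S) = s then \<tau> X X else 0)"
  proof (rule sum.cong[OF refl])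
    fix S assume "S \<in> Lv {0..<n} k"
    then have "S \<subseteq> {0..<n}" by (simp add: Lv_def)
    then have "(\<Sum>A\<in>Lv S s. marginal n \<tau> S A A) = (\<Sum>X\<in>{X \<in> Pow {0..<n}. card (X \<inter> S) = s}. \<tau> X X)"
      using inner_count[of S n \<tau> s] by simp
    also have "\<dots> = (\<Sum>X\<in>Pow {0..<n}. if card (X \<inter> S) = s then \<tau> X X else 0)"
      by (rule sum.inter_filter) simp
    finally show "(\<Sum>A\<in>Lv S s. marginal n \<tau> S A A) = (\<Sum>X\<in>Pow {0..<n}. if card (X \<inter> S) = s then \<tau> X X else 0)" .
  qed
  also have "\<dots> = (\<Sum>X\<in>Pow {0..<n}. \<Sum>S\<in>Lv {0..<n} k. if card (X \<inter> S) = s then \<tau> X X else 0)"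
    by (rule sum.swap)
  also have "\<dots> = (\<Sum>X\<in>Pow {0..<n}. of_nat (?N (card X)) * \<tau> X X)"
  proof (rule sum.cong[OF refl])
    fix X assume X: "X \<in> Pow {0..<n}"
    have "(\<Sum>S\<in>Lv {0..<n} k. if card (X \<inter> S) = s then \<tau> X X else 0)
        = (\<Sum>S\<in>{S \<in> Lv {0..<n} k. card (X \<inter> S) = s}. \<tau> X X)"
      by (rule sum.inter_filter[symmetric]) (rule fL)
    also have "\<dots> = of_nat (card {S. S \<in> Lv {0..<n} k \<and> card (X \<inter> S) = s}) * \<tau> X X"
      by simp
    also have "\<dots> = of_nat (?N (card X)) * \<tau> X X"
      using count_sets[of X n s k] X assms by simp
    finally show "(\<Sum>S\<in>Lv {0..<n} k. if card (X \<inter> S) = s then \<tau> X X else 0) = of_nat (?N (card X)) * \<tau> X X" .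
  qed
  also have "\<dots> = (\<Sum>i\<le>n. \<Sum>X\<in>Lv {0..<n} i. of_nat (?N (card X)) * \<tau> X X)"
    by (rule sum_levels_n)
  also have "\<dots> = (\<Sum>i\<le>n. of_nat (?N i) * (\<Sum>X\<in>Lv {0..<n} i. \<tau> X X))"
    by (intro sum.cong refl) (auto simp: Lv_def sum_distrib_left)
  finally show ?thesis .
qed

lemma Lv_basis: "X \<in> Lv {0..<n} i \<Longrightarrow> X \<in> basis_idx n"
  by (auto simp: Lv_def basis_idx_def)

lemma zero_from_sum:
  assumes d: "density n \<sigma>" and z: "(\<Sum>X\<in>Lv {0..<n} i. \<sigma> X X) = 0" and X: "X \<in> Lv {0..<n} i"
  shows "\<sigma> X X = 0"
proof -
  have r: "\<And>Y. Y \<in> Lv {0..<n} i \<Longrightarrow> \<sigma> Y Y \<in> \<real> \<and> Re (\<sigma> Y Y) \<ge> 0"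
    using diag_real[OF d] Lv_basis by blast
  have "(\<Sum>Y\<in>Lv {0..<n} i. Re (\<sigma> Y Y)) = 0" using z by (metis Re_sum zero_complex.sel(1))
  then have "\<forall>Y\<in>Lv {0..<n} i. Re (\<sigma> Y Y) = 0"
    using sum_nonneg_eq_0_iff[of "Lv {0..<n} i" "\<lambda>Y. Re (\<sigma> Y Y)"] r by (simp add: finite_Lv)
  then have "Re (\<sigma> X X) = 0" using X by blast
  then show ?thesis using r[OF X] by (metis of_real_Re of_real_0)
qed

lemma levels:
  fixes n k :: nat and lam :: "nat \<Rightarrow> real" and \<sigma> :: qop
  assumes kn: "k \<le> n"
    and lam'_def: "lam' = (\<lambda>i. if i \<le> k then lam i else 0)"
    and d: "density n \<sigma>"
    and mar: "\<forall>S\<in>Lv {0..<n} k. marginal n \<sigma> S = marginal n (symm n lam') S"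
    and U: "\<forall>a :: nat \<Rightarrow> real.
       ((\<forall>i\<le>n. a i \<ge> 0) \<and>
        (\<forall>s\<le>k. (\<Sum>i\<le>n. a i * coef n k i s) = (\<Sum>i\<le>k. lam i * coef n k i s)))
       \<longrightarrow> (\<forall>i\<le>n. a i = lam' i)"
  shows "\<forall>i\<le>n. (\<Sum>X\<in>Lv {0..<n} i. \<sigma> X X) = complex_of_real (lam' i)"
proof -
  define w where "w i = Re (\<Sum>X\<in>Lv {0..<n} i. \<sigma> X X)" for i
  have r: "\<And>Y. Y \<in> Lv {0..<n} i \<Longrightarrow> \<sigma> Y Y \<in> \<real> \<and> Re (\<sigma> Y Y) \<ge> 0" for i
    using diag_real[OF d] Lv_basis by blast
  have wr: "(\<Sum>X\<in>Lv {0..<n} i. \<sigma> X X) = complex_of_real (w i)" for i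
  proof -
    have "(\<Sum>X\<in>Lv {0..<n} i. \<sigma> X X) \<in> \<real>" using r by (intro sum_in_Reals) blast
    then show ?thesis unfolding w_def by (rule of_real_Re[symmetric])
  qed
  have w0: "w i \<ge> 0" for i unfolding w_def using r by (simp add: sum_nonneg)
  have rl: "(\<Sum>X\<in>Lv {0..<n} i. symm n lam' X X) = complex_of_real (lam' i)" if "i \<le> n" for i
  proof -
    have "(\<Sum>X\<in>Lv {0..<n} i. symm n lam' X X) = (\<Sum>X\<in>Lv {0..<n} i. complex_of_real (lam' i / real (n choose i)))"
      by (intro sum.cong refl) (simp add: symm_on_levels)
    also have "\<dots> = complex_of_real (lam' i)" using that by (simp add: card_Lv)
    finally show ?thesis .
  qed
  let ?N = "\<lambda>s i. real ((i choose s) * ((n - i) choose (k - s)))"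
  have sys: "(\<Sum>i\<le>n. w i * coef n k i s) = (\<Sum>i\<le>k. lam i * coef n k i s)" if s: "s \<le> k" for s
  proof -
    have "(\<Sum>S\<in>Lv {0..<n} k. \<Sum>A\<in>Lv S s. marginal n \<sigma> S A A) = (\<Sum>S\<in>Lv {0..<n} k. \<Sum>A\<in>Lv S s. marginal n (symm n lam') S A A)"
      using mar by simp
    then have "(\<Sum>i\<le>n. of_nat ((i choose s) * ((n - i) choose (k - s))) * (\<Sum>X\<in>Lv {0..<n} i. \<sigma> X X))
       = (\<Sum>i\<le>n. of_nat ((i choose s) * ((n - i) choose (k - s))) * (\<Sum>X\<in>Lv {0..<n} i. symm n lam' X X))"
      using diag_count[OF s kn, of \<sigma>] diag_count[OF s kn, of "symm n lam'"] by simp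
    also have "\<dots> = (\<Sum>i\<le>n. of_nat ((i choose s) * ((n - i) choose (k - s))) * complex_of_real (lam' i))"
      by (intro sum.cong refl) (simp add: rl)
    finally have "complex_of_real (\<Sum>i\<le>n. ?N s i * w i) = complex_of_real (\<Sum>i\<le>n. ?N s i * lam' i)"
      by (simp add: wr)
    then have e: "(\<Sum>i\<le>n. ?N s i * w i) = (\<Sum>i\<le>n. ?N s i * lam' i)" by (simp only: of_real_eq_iff)
    have c: "\<And>b. (\<Sum>i\<le>n. b i * coef n k i s) = (\<Sum>i\<le>n. ?N s i * b i) / real (n choose k)"
      by (simp add: sum_divide_distrib coef_alt s kn) (intro sum.cong refl, simp)
    have "(\<Sum>i\<le>n. w i * coef n k i s) = (\<Sum>i\<le>n. lam' i * coef n k i s)"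
      unfolding c e ..
    also have "\<dots> = (\<Sum>i\<le>n. if i \<le> k then lam i * coef n k i s else 0)"
      by (intro sum.cong) (auto simp: lam'_def)
    also have "\<dots> = (\<Sum>i\<le>k. lam i * coef n k i s)" by (rule sum_lam'[OF kn])
    finally show ?thesis .
  qed
  have "\<forall>i\<le>n. w i = lam' i" using U w0 sys by blast
  then show ?thesis using wr by simp
qed

lemma Qf_two:
  assumes "X \<in> basis_idx n" "Y \<in> basis_idx n"
  shows "Qf n M (\<lambda>Z. dl X Z + (-1) * dl Y Z) = M X X - M X Y - M Y X + M Y Y"
  using Qf_add[of n M "dl X" "-1" "dl Y"] Qf_dl[OF assms(1)] Qf_dl[OF assms(2)]
    Bf_dl_dl[OF assms(1) assms(2)] Bf_dl_dl[OF assms(2) assms(1)] by simp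

lemma Bf_dl_two:
  assumes "Z \<in> basis_idx n" "X \<in> basis_idx n" "Y \<in> basis_idx n"
  shows "Bf n M (dl Z) (\<lambda>W. dl X W + (-1) * dl Y W) = M Z X - M Z Y"
proof -
  have e: "\<And>A B. cnj (dl Z A) * M A B * (dl X B + (-1) * dl Y B) = cnj (dl Z A) * M A B * dl X B - cnj (dl Z A) * M A B * dl Y B"
    by (simp add: ring_distribs)
  have "Bf n M (dl Z) (\<lambda>W. dl X W + (-1) * dl Y W) = Bf n M (dl Z) (dl X) - Bf n M (dl Z) (dl Y)"
    unfolding Bf_def e by (simp only: sum_subtractf)
  then show ?thesis using Bf_dl_dl assms by simp
qed

lemma card_inv:
  fixes n :: nat and f :: "nat set \<Rightarrow> 'b"
  assumes sw: "\<forall>p q C. p < n \<and> q < n \<and> p \<noteq> q \<and> C \<subseteq> {0..<n} - {p, q} \<longrightarrow> f (insert q C) = f (insert p C)"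
  shows "Y \<subseteq> {0..<n} \<Longrightarrow> Y' \<subseteq> {0..<n} \<Longrightarrow> card Y = card Y' \<Longrightarrow> f Y = f Y'"
proof (induction "card (Y - Y')" arbitrary: Y)
  case (0 Y)
  have fY: "finite Y" "finite Y'" using finite_subset[OF 0(2)] finite_subset[OF 0(3)] by auto
  then have "Y \<subseteq> Y'" using 0 by auto
  then have "Y = Y'" using card_subset_eq[OF fY(2)] 0(4) by simp
  then show ?case by simp
next
  case (Suc m Y)
  have fY: "finite Y" "finite Y'" using finite_subset[OF Suc.prems(1)] finite_subset[OF Suc.prems(2)] by auto
  have "Y - Y' \<noteq> {}"
  proof
    assume "Y - Y' = {}"
    then have "card (Y - Y') = 0" by (simp only: card.empty)
    then show False using Suc.hyps(2) by simp
  qed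
  then obtain q where q: "q \<in> Y" "q \<notin> Y'" by blast
  have "Y' - Y \<noteq> {}"
  proof
    assume "Y' - Y = {}"
    then have "Y' \<subseteq> Y" by auto
    then have "Y' = Y" using card_subset_eq[OF fY(1)] Suc.prems(3) by simp
    then show False using q by simp
  qed
  then obtain p where p: "p \<in> Y'" "p \<notin> Y" by auto
  define C where "C = Y - {q}"
  define Y1 where "Y1 = insert p C"
  have Yq: "Y = insert q C" using q C_def by auto
  have "p < n" "q < n" using p q Suc.prems by auto
  moreover have "C \<subseteq> {0..<n} - {p, q}" using C_def p Suc.prems by auto
  moreover have "p \<noteq> q" using p q by auto
  ultimately have "f (insert q C) = f (insert p C)" using sw by blast
  then have e: "f Y = f Y1" unfolding Y1_def using Yq by simp
  have fC: "finite C" using C_def fY by simp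
  have pC: "p \<notin> C" "q \<notin> C" using p C_def by auto
  have c1: "card (insert p C) = Suc (card C)" using fC pC by simp
  have c2: "card (insert q C) = Suc (card C)" using fC pC by simp
  have cY1: "card Y1 = card Y" unfolding Y1_def using c1 c2 Yq by simp
  have "Y1 - Y' = (Y - Y') - {q}" unfolding Y1_def C_def using p q by auto
  then have "card (Y1 - Y') = m" using Suc.hyps(2) q fY by simp
  moreover have "Y1 \<subseteq> {0..<n}" using Y1_def C_def p Suc.prems by auto
  ultimately have "f Y1 = f Y'" using Suc.hyps(1)[of Y1] Suc.prems cY1 by simp
  then show ?case using e by simp
qed

lemma sum_psd_zero:
  fixes z :: "'a \<Rightarrow> complex"
  assumes "finite I" "\<forall>i\<in>I. z i \<in> \<real> \<and> Re (z i) \<ge> 0" "sum z I = 0" "j \<in> I"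
  shows "z j = 0"
proof -
  have "(\<Sum>i\<in>I. Re (z i)) = 0" using assms(3) by (metis Re_sum zero_complex.sel(1))
  then have "\<forall>i\<in>I. Re (z i) = 0"
    using sum_nonneg_eq_0_iff[of I "\<lambda>i. Re (z i)"] assms(1,2) by simp
  then have "Re (z j) = 0" using assms(4) by blast
  then show ?thesis using assms(2,4) by (metis of_real_Re of_real_0)
qed

lemma swap_inv:
  fixes \<sigma> :: qop and b :: "nat \<Rightarrow> real"
  assumes k2: "2 \<le> k" "k \<le> n" and d: "density n \<sigma>"
    and mar: "\<forall>S\<in>Lv {0..<n} k. marginal n \<sigma> S = marginal n (symm n b) S"
  shows "\<forall>p q C. p < n \<and> q < n \<and> p \<noteq> q \<and> C \<subseteq> {0..<n} - {p, q} \<longrightarrow> \<sigma> Z (insert q C) = \<sigma> Z (insert p C)"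
proof (intro allI impI, elim conjE)
  fix p q C assume pn: "p < n" and qn: "q < n" and pq: "p \<noteq> q" and C: "C \<subseteq> {0..<n} - {p, q}"
  have cpq: "card ({0..<n} - {p, q}) = n - 2" using pn qn pq by (simp add: card_Diff_subset)
  have "k - 2 \<le> card ({0..<n} - {p, q})" using cpq k2 by simp
  then obtain T where T: "T \<subseteq> {0..<n} - {p, q}" "card T = k - 2" "finite T"
    by (rule obtain_subset_with_card_n)
  define S where "S = insert p (insert q T)"
  have pqT: "p \<notin> T" "q \<notin> T" using T by auto
  have cS: "card S = k" unfolding S_def using T pqT pq k2 by simp
  have Ssub: "S \<subseteq> {0..<n}" unfolding S_def using T pn qn by auto
  have SLv: "S \<in> Lv {0..<n} k" using cS Ssub by (simp add: Lv_def)
  define E where "E = C \<inter> S"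
  define w where "w F = (\<lambda>W. dl (insert q F) W + (-1) * dl (insert p F) W)" for F
  have bas: "insert q F \<in> basis_idx n" "insert p F \<in> basis_idx n" if "F \<subseteq> {0..<n} - {p, q}" for F
    using that pn qn by (auto simp: basis_idx_def)
  have Qw: "Qf n \<sigma> (w F) = \<sigma> (insert q F) (insert q F) - \<sigma> (insert q F) (insert p F)
        - \<sigma> (insert p F) (insert q F) + \<sigma> (insert p F) (insert p F)" if "F \<subseteq> {0..<n} - {p, q}" for F
    unfolding w_def using Qf_two[OF bas[OF that]] .
  have ES: "insert q E \<subseteq> S" "insert p E \<subseteq> S" unfolding E_def S_def by auto
  let ?m = "\<lambda>\<tau>. marginal n \<tau> S (insert q E) (insert q E) - marginal n \<tau> S (insert q E) (insert p E)
     - marginal n \<tau> S (insert p E) (insert q E) + marginal n \<tau> S (insert p E) (insert p E)"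
  have mr: "?m (symm n b) = 0"
  proof -
    have fE: "finite E" unfolding E_def using Ssub finite_subset by (meson finite_Int finite_atLeastLessThan finite_subset)
    have "p \<notin> E" "q \<notin> E" using C unfolding E_def by auto
    then have "card (insert q E) = card (insert p E)" using fE by simp
    then show ?thesis using marginal_symm[OF Ssub] ES by simp
  qed
  have ms: "?m \<sigma> = (\<Sum>D'\<in>Pow ({0..<n} - S). Qf n \<sigma> (w (E \<union> D')))"
  proof -
    have "?m \<sigma> = (\<Sum>D'\<in>Pow ({0..<n} - S). \<sigma> (insert q E \<union> D') (insert q E \<union> D') - \<sigma> (insert q E \<union> D') (insert p E \<union> D')
        - \<sigma> (insert p E \<union> D') (insert q E \<union> D') + \<sigma> (insert p E \<union> D') (insert p E \<union> D'))"
      using ES by (simp add: marginal_def sum.distrib sum_subtractf)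
    also have "\<dots> = (\<Sum>D'\<in>Pow ({0..<n} - S). Qf n \<sigma> (w (E \<union> D')))"
    proof (rule sum.cong[OF refl])
      fix D' assume D': "D' \<in> Pow ({0..<n} - S)"
      have sub: "E \<union> D' \<subseteq> {0..<n} - {p, q}" using D' C unfolding E_def S_def by auto
      show "\<sigma> (insert q E \<union> D') (insert q E \<union> D') - \<sigma> (insert q E \<union> D') (insert p E \<union> D')
        - \<sigma> (insert p E \<union> D') (insert q E \<union> D') + \<sigma> (insert p E \<union> D') (insert p E \<union> D') = Qf n \<sigma> (w (E \<union> D'))"
        using Qw[OF sub] by simp
    qed
    finally show ?thesis .
  qed
  have "?m \<sigma> = ?m (symm n b)" using mar SLv by simp
  then have sz: "(\<Sum>D'\<in>Pow ({0..<n} - S). Qf n \<sigma> (w (E \<union> D'))) = 0" using ms mr by simp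
  have "C - S \<in> Pow ({0..<n} - S)" using C by auto
  moreover have "E \<union> (C - S) = C" unfolding E_def by auto
  ultimately have "Qf n \<sigma> (w C) = 0"
    using sum_psd_zero[OF _ _ sz, of "C - S"] Qf_real[OF d] by simp
  then have bz: "Bf n \<sigma> (dl Z) (w C) = 0" by (rule kernel[OF d])
  show "\<sigma> Z (insert q C) = \<sigma> Z (insert p C)"
  proof (cases "Z \<in> basis_idx n")
    case True
    then show ?thesis using bz Bf_dl_two[OF True bas[OF C]] unfolding w_def by simp
  next
    case False
    then show ?thesis using d unfolding density_def by auto
  qed
qed

lemma final:
  fixes \<sigma> :: qop and lam' :: "nat \<Rightarrow> real"
  assumes kn: "k \<le> n" and d: "density n \<sigma>"
    and mar: "\<forall>S\<in>Lv {0..<n} k. marginal n \<sigma> S = marginal n (symm n lam') S"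
    and inv: "\<forall>Z Y Y'. Y \<subseteq> {0..<n} \<and> Y' \<subseteq> {0..<n} \<and> card Y = card Y' \<longrightarrow> \<sigma> Z Y = \<sigma> Z Y'"
    and zero: "\<forall>X. X \<subseteq> {0..<n} \<and> k < card X \<longrightarrow> \<sigma> X X = 0"
    and lz: "\<forall>i. k < i \<longrightarrow> lam' i = 0"
  shows "\<sigma> = symm n lam'"
proof -
  have herm: "\<And>A B. A \<subseteq> {0..<n} \<Longrightarrow> B \<subseteq> {0..<n} \<Longrightarrow> \<sigma> B A = cnj (\<sigma> A B)"
    using d unfolding density_def basis_idx_def by blast
  have main: "\<sigma> X Y = symm n lam' X Y" if "X \<subseteq> {0..<n}" "Y \<subseteq> {0..<n}" for X Y
    using that
  proof (induction "2*n - (card X + card Y)" arbitrary: X Y rule: less_induct)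
    case (less X Y)
    have cX: "card X \<le> n" using card_mono[OF _ less.prems(1)] by simp
    have cY: "card Y \<le> n" using card_mono[OF _ less.prems(2)] by simp
    show ?case
    proof (cases "k < card X")
      case True
      have "\<sigma> X X = 0" using zero less.prems True by blast
      then have "\<sigma> X Y = 0" by (rule zero_row(2)[OF d])
      moreover have "symm n lam' X Y = 0" using lz True by (simp add: symm_def)
      ultimately show ?thesis by simp
    next
      case False1: False
      show ?thesis
      proof (cases "k < card Y")
        case True
        have "\<sigma> Y Y = 0" using zero less.prems True by blast
        then have "\<sigma> X Y = 0" by (rule zero_row(1)[OF d])
        moreover have "symm n lam' X Y = 0" using True False1 by (simp add: symm_def)
        ultimately show ?thesis by simp
      next
        case False2: False
        define A where "A = {0..<card X}"
        define B where "B = {0..<card Y}"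
        define S where "S = {0..<k}"
        have AS: "A \<subseteq> S" "B \<subseteq> S" using False1 False2 unfolding A_def B_def S_def by auto
        have Ssub: "S \<subseteq> {0..<n}" using kn unfolding S_def by auto
        have SLv: "S \<in> Lv {0..<n} k" using Ssub unfolding S_def Lv_def by simp
        have cA: "card A = card X" "card B = card Y" unfolding A_def B_def by simp_all
        have "marginal n \<sigma> S A B = marginal n (symm n lam') S A B" using mar SLv by simp
        then have eqs: "(\<Sum>C\<in>Pow ({0..<n} - S). \<sigma> (A \<union> C) (B \<union> C)) = (\<Sum>C\<in>Pow ({0..<n} - S). symm n lam' (A \<union> C) (B \<union> C))"
          using AS by (simp add: marginal_def)
        have fin: "finite (Pow ({0..<n} - S))" by simp
        have em: "{} \<in> Pow ({0..<n} - S)" by simp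
        have rest: "(\<Sum>C\<in>Pow ({0..<n} - S) - {{}}. \<sigma> (A \<union> C) (B \<union> C)) = (\<Sum>C\<in>Pow ({0..<n} - S) - {{}}. symm n lam' (A \<union> C) (B \<union> C))"
        proof (rule sum.cong[OF refl])
          fix C assume C: "C \<in> Pow ({0..<n} - S) - {{}}"
          have fC: "finite C" using C finite_subset by (meson Diff_iff PowD finite_Diff finite_atLeastLessThan)
          have cC: "card C \<ge> 1" using C fC by (simp add: Suc_leI card_gt_0_iff)
          have dj: "A \<inter> C = {}" "B \<inter> C = {}" using C AS by auto
          have fA: "finite A" "finite B" unfolding A_def B_def by simp_all
          have cu: "card (A \<union> C) = card X + card C" "card (B \<union> C) = card Y + card C"
            using card_Un_disjoint[OF fA(1) fC dj(1)] card_Un_disjoint[OF fA(2) fC dj(2)] cA by simp_all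
          have sub: "A \<union> C \<subseteq> {0..<n}" "B \<union> C \<subseteq> {0..<n}" using C AS Ssub by auto
          have "card (A \<union> C) \<le> n" "card (B \<union> C) \<le> n"
            using card_mono[OF _ sub(1)] card_mono[OF _ sub(2)] by simp_all
          then have lt: "2*n - (card (A \<union> C) + card (B \<union> C)) < 2*n - (card X + card Y)"
            using cu cC by linarith
          show "\<sigma> (A \<union> C) (B \<union> C) = symm n lam' (A \<union> C) (B \<union> C)"
            by (rule less.hyps[OF lt sub])
        qed
        have "\<sigma> A B = symm n lam' A B"
          using eqs rest sum.remove[OF fin em, of "\<lambda>C. \<sigma> (A \<union> C) (B \<union> C)"]
            sum.remove[OF fin em, of "\<lambda>C. symm n lam' (A \<union> C) (B \<union> C)"] by simp
        moreover have "\<sigma> X Y = \<sigma> A B"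
        proof -
          have Asub: "A \<subseteq> {0..<n}" "B \<subseteq> {0..<n}" using AS Ssub by auto
          have "\<sigma> X Y = \<sigma> X B" using inv less.prems Asub cA by metis
          also have "\<dots> = cnj (\<sigma> B X)" using herm[OF Asub(2) less.prems(1)] by simp
          also have "\<sigma> B X = \<sigma> B A" using inv less.prems Asub cA by metis
          also have "cnj (\<sigma> B A) = \<sigma> A B" using herm[OF Asub(1) Asub(2)] by simp
          finally show ?thesis .
        qed
        moreover have "symm n lam' X Y = symm n lam' A B"
          using AS Ssub less.prems cA by (simp add: symm_def)
        ultimately show ?thesis by simp
      qed
    qed
  qed
  show ?thesis
  proof (intro ext)
    fix X Y
    show "\<sigma> X Y = symm n lam' X Y"
    proof (cases "X \<subseteq> {0..<n} \<and> Y \<subseteq> {0..<n}")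
      case True then show ?thesis using main by blast
    next
      case False
      then have "\<sigma> X Y = 0" using d unfolding density_def basis_idx_def by blast
      then show ?thesis using False by (auto simp: symm_def)
    qed
  qed
qed

lemma k1_lam1:
  fixes n :: nat and lam :: "nat \<Rightarrow> real"
  assumes n2: "2 \<le> n" and nn: "\<forall>i\<le>1. lam i \<ge> 0"
    and U: "\<forall>a :: nat \<Rightarrow> real.
       ((\<forall>i\<le>n. a i \<ge> 0) \<and>
        (\<forall>s\<le>1. (\<Sum>i\<le>n. a i * coef n 1 i s) = (\<Sum>i\<le>1. lam i * coef n 1 i s)))
       \<longrightarrow> (\<forall>i\<le>n. a i = (if i \<le> 1 then lam i else 0))"
  shows "lam 1 = 0"
proof -
  define a :: "nat \<Rightarrow> real" where "a i = (if i = 0 then lam 0 + lam 1 / 2 else if i = 2 then lam 1 / 2 else 0)" for i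
  have a0: "\<forall>i\<le>n. a i \<ge> 0" using nn by (simp add: a_def)
  have c: "coef n 1 i s = real (i choose s) * real ((n - i) choose (1 - s)) / real n" if "i \<le> n" "s \<le> 1" for i s
    using coef_alt[OF that(1) that(2)] n2 by simp
  have nr: "real n \<ge> 2" using n2 by simp
  have sys: "(\<Sum>i\<le>n. a i * coef n 1 i s) = (\<Sum>i\<le>1. lam i * coef n 1 i s)" if s: "s \<le> 1" for s
  proof -
    have "(\<Sum>i\<le>n. a i * coef n 1 i s) = (\<Sum>i\<in>{0, 2}. a i * coef n 1 i s)"
      by (rule sum.mono_neutral_right) (use n2 in \<open>auto simp: a_def\<close>)
    also have "\<dots> = a 0 * coef n 1 0 s + a 2 * coef n 1 2 s" by simp
    finally have l: "(\<Sum>i\<le>n. a i * coef n 1 i s) = a 0 * coef n 1 0 s + a 2 * coef n 1 2 s" .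
    have r: "(\<Sum>i\<le>1. lam i * coef n 1 i s) = lam 0 * coef n 1 0 s + lam 1 * coef n 1 1 s" by simp
    have n1: "real (n - 1) = real n - 1" "real (n - 2) = real n - 2" using n2 by auto
    have n0: "real n \<noteq> 0" using nr by simp
    have v00: "coef n 1 0 0 = 1" using c[of 0 0] n2 n0 by simp
    have v10: "coef n 1 1 0 = (real n - 1) / real n" using c[of 1 0] n2 n1 by simp
    have v20: "coef n 1 2 0 = (real n - 2) / real n" using c[of 2 0] n2 n1 by simp
    have v01: "coef n 1 0 1 = 0" using c[of 0 1] n2 by simp
    have v11: "coef n 1 1 1 = 1 / real n" using c[of 1 1] n2 by simp
    have v21: "coef n 1 2 1 = 2 / real n" using c[of 2 1] n2 by simp
    show ?thesis
    proof (cases "s = 0")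
      case True
      show ?thesis unfolding l r
        by (simp only: True v00 v10 v20) (simp add: a_def divide_simps n0, simp add: algebra_simps, use n2 in simp)
    next
      case False
      then have "s = 1" using s by simp
      then show ?thesis unfolding l r
        by (simp only: v01 v11 v21) (simp add: a_def field_simps n0)
    qed
  qed
  have "\<forall>i\<le>n. a i = (if i \<le> 1 then lam i else 0)" using U a0 sys by blast
  then have "a 2 = 0" using n2 by auto
  then show ?thesis by (simp add: a_def)
qed

theorem mainTheorem18:
  fixes n k :: nat and lam :: "nat \<Rightarrow> real"
  assumes "1 \<le> k" and "k \<le> n"
    and "\<forall>i\<le>k. lam i \<ge> 0" and "(\<Sum>i\<le>k. lam i) = 1"
  defines "lam' \<equiv> (\<lambda>i. if i \<le> k then lam i else 0)"
  shows "Lnum n (dicke_mixture n k lam) \<le> k \<longleftrightarrow>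
    (\<forall>a :: nat \<Rightarrow> real.
       ((\<forall>i\<le>n. a i \<ge> 0) \<and>
        (\<forall>s\<le>k. (\<Sum>i\<le>n. a i * coef n k i s) = (\<Sum>i\<le>k. lam i * coef n k i s)))
       \<longrightarrow> (\<forall>i\<le>n. a i = lam' i))"
proof -
  have lam'_eq: "lam' = (\<lambda>i. if i \<le> k then lam i else 0)" using lam'_def by simp
  have rho: "dicke_mixture n k lam = symm n lam'" using dicke_eq_symm[OF assms(2)] lam'_eq by simp
  have sl: "(\<Sum>i\<le>n. lam' i) = 1" using sum_lam'[OF assms(2)] assms(4) unfolding lam'_eq by simp
  have dr: "density n (symm n lam')"
    by (rule density_symm) (use assms(3) sl in \<open>auto simp: lam'_eq\<close>)
  have lz: "\<forall>i. k < i \<longrightarrow> lam' i = 0" unfolding lam'_eq by simp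
  show ?thesis unfolding rho
  proof
    assume L: "Lnum n (symm n lam') \<le> k"
    show "\<forall>a :: nat \<Rightarrow> real.
       ((\<forall>i\<le>n. a i \<ge> 0) \<and>
        (\<forall>s\<le>k. (\<Sum>i\<le>n. a i * coef n k i s) = (\<Sum>i\<le>k. lam i * coef n k i s)))
       \<longrightarrow> (\<forall>i\<le>n. a i = lam' i)"
      using fwd[OF assms(2) assms(3) assms(4) lam'_eq L] by blast
  next
    assume U: "\<forall>a :: nat \<Rightarrow> real.
       ((\<forall>i\<le>n. a i \<ge> 0) \<and>
        (\<forall>s\<le>k. (\<Sum>i\<le>n. a i * coef n k i s) = (\<Sum>i\<le>k. lam i * coef n k i s)))
       \<longrightarrow> (\<forall>i\<le>n. a i = lam' i)"
    show "Lnum n (symm n lam') \<le> k"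
    proof (cases "k = n")
      case True
      show ?thesis using Lnum_le[OF full_det[OF dr], of k] True by simp
    next
      case False
      then have kn: "k < n" using assms(2) by simp
      have det: "determines n (Lv {0..<n} k) (symm n lam')"
        unfolding determines_def
      proof (intro conjI)
        show "Lv {0..<n} k \<subseteq> Pow {0..<n}" by (auto simp: Lv_def)
        show "compatible n (symm n lam') (Lv {0..<n} k) = {symm n lam'}"
        proof (intro equalityI subsetI)
          fix \<sigma> assume "\<sigma> \<in> compatible n (symm n lam') (Lv {0..<n} k)"
          then have d: "density n \<sigma>" and mar: "\<forall>S\<in>Lv {0..<n} k. marginal n \<sigma> S = marginal n (symm n lam') S"
            unfolding compatible_def by auto
          have lev: "\<forall>i\<le>n. (\<Sum>X\<in>Lv {0..<n} i. \<sigma> X X) = complex_of_real (lam' i)"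
            by (rule levels[OF assms(2) lam'_eq d mar U])
          have zl: "\<sigma> X X = 0" if "X \<subseteq> {0..<n}" "lam' (card X) = 0" for X
          proof -
            have "card X \<le> n" using card_mono[OF _ that(1)] by simp
            then have "(\<Sum>Y\<in>Lv {0..<n} (card X). \<sigma> Y Y) = 0" using lev that(2) by simp
            moreover have "X \<in> Lv {0..<n} (card X)" using that(1) by (simp add: Lv_def)
            ultimately show ?thesis by (rule zero_from_sum[OF d])
          qed
          have zero: "\<forall>X. X \<subseteq> {0..<n} \<and> k < card X \<longrightarrow> \<sigma> X X = 0"
            using zl lz by blast
          have inv: "\<forall>Z Y Y'. Y \<subseteq> {0..<n} \<and> Y' \<subseteq> {0..<n} \<and> card Y = card Y' \<longrightarrow> \<sigma> Z Y = \<sigma> Z Y'"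
          proof (cases "2 \<le> k")
            case True
            show ?thesis
            proof (intro allI impI, elim conjE)
              fix Z Y Y' assume "Y \<subseteq> {0..<n}" "Y' \<subseteq> {0..<n}" "card Y = card Y'"
              then show "\<sigma> Z Y = \<sigma> Z Y'"
                using card_inv[OF swap_inv[OF True assms(2) d mar, of Z]] by blast
            qed
          next
            case False
            then have k1: "k = 1" using assms(1) by simp
            have l1: "lam 1 = 0"
            proof (rule k1_lam1)
              show "2 \<le> n" using kn k1 by simp
              show "\<forall>i\<le>1. 0 \<le> lam i" using assms(3) k1 by simp
              show "\<forall>a :: nat \<Rightarrow> real.
                ((\<forall>i\<le>n. a i \<ge> 0) \<and>
                (\<forall>s\<le>1. (\<Sum>i\<le>n. a i * coef n 1 i s) = (\<Sum>i\<le>1. lam i * coef n 1 i s)))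
                \<longrightarrow> (\<forall>i\<le>n. a i = (if i \<le> 1 then lam i else 0))"
                using U unfolding lam'_eq k1 .
            qed
            have nz: "\<sigma> Z Y = 0" if "Y \<subseteq> {0..<n}" "Y \<noteq> {}" for Z Y
            proof -
              have fY: "finite Y" using that(1) finite_subset by auto
              then have "card Y \<ge> 1" using that(2) by (simp add: Suc_leI card_gt_0_iff)
              then have "lam' (card Y) = 0" unfolding lam'_eq using k1 l1 by auto
              then have "\<sigma> Y Y = 0" using zl that(1) by blast
              then show ?thesis by (rule zero_row(1)[OF d])
            qed
            show ?thesis
            proof (intro allI impI, elim conjE)
              fix Z Y Y' assume Y: "Y \<subseteq> {0..<n}" "Y' \<subseteq> {0..<n}" "card Y = card Y'"
              have fY: "finite Y" "finite Y'" using Y finite_subset by auto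
              show "\<sigma> Z Y = \<sigma> Z Y'"
              proof (cases "Y = {}")
                case True
                then have "Y' = {}" using Y fY by simp
                then show ?thesis using True by simp
              next
                case False
                then have "Y' \<noteq> {}" using Y fY by auto
                then show ?thesis using nz Y False by metis
              qed
            qed
          qed
          show "\<sigma> \<in> {symm n lam'}" using final[OF assms(2) d mar inv zero lz] by simp
        next
          fix \<sigma> assume "\<sigma> \<in> {symm n lam'}"
          then show "\<sigma> \<in> compatible n (symm n lam') (Lv {0..<n} k)"
            using dr unfolding compatible_def by simp
        qed
      qed
      show ?thesis by (rule Lnum_le[OF det]) (simp add: Lv_def)
    qed
  qed
qed

end
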